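(* Let $\mathbf b=b_0b_1b_2\cdots\in\{1,-1\}^{\mathbb N}$. For each $t\ge 0$ there is a nonnegative integer $\ell_t$ such that $D_{k,b_k}(\ell_t,\ell_t+2^{t+2}-1)=0$ for all $k\ge t$.
   Context: For $b\in\{-1,1\}$, $k\ge0$ and integers $\ell\le n$, $D_{k,b}(\ell,n)$ denotes the number of integers $i$ with $\ell<i\le n$ and $i\equiv(2+b)\cdot 2^k \pmod{2^{k+2}}$. *)

theory Defs
  imports Main
begin

definition D :: "nat \<Rightarrow> int \<Rightarrow> int \<Rightarrow> int \<Rightarrow> nat" where
  "D k b l n = card {i::int. l < i \<and> i \<le> n \<and> i mod 2 ^ (k + 2) = ((2 + b) * 2 ^ k) mod 2 ^ (k + 2)}"

end

theory Submission
  imports Defs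
begin
lemma gen:
  fixes L :: int and a :: "nat \<Rightarrow> int"
  assumes h0: "\<forall>q u. L < u \<longrightarrow> u < L+4 \<longrightarrow> u \<noteq> (2 + a 0 + 4*q)"
      and h1: "\<forall>q u. L < u \<longrightarrow> u < L+4 \<longrightarrow> u \<noteq> 2*(2 + a 1 + 4*q)"
      and h2: "\<forall>q u. L < u \<longrightarrow> u < L+4 \<longrightarrow> u \<noteq> 4*(2 + a 2 + 4*q)"
      and h3: "\<forall>q u. L < u \<longrightarrow> u < L+4 \<longrightarrow> u \<noteq> 8*(2 + a 3 + 4*q)"
      and h4: "\<forall>u. L < u \<longrightarrow> u < L+4 \<longrightarrow> \<not> 16 dvd u"
  shows "\<forall>u d q. L < u \<and> u < L+4 \<and> u = 2^d*(2 + a d + 4*q) \<longrightarrow> False"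
proof (intro allI impI)
  fix u d q assume H: "L < u \<and> u < L+4 \<and> u = (2::int)^d*(2 + a d + 4*q)"
  consider "d = 0" | "d = 1" | "d = 2" | "d = 3" | "d \<ge> 4" by linarith
  then show False
  proof cases
    case 1 then show False using H h0 by auto
  next
    case 2 then show False using H h1 by auto
  next
    case 3 then show False using H h2 by auto
  next
    case 4 then show False using H h3 by auto
  next
    case 5
    have "d = 4 + (d-4)" using 5 by simp
    then have "(2::int)^d = 2^4 * 2^(d-4)" by (metis power_add)
    then have "16 dvd u" using H by simp
    then show False using h4 H by blast
  qed
qed

lemma choose:
  fixes a :: "nat \<Rightarrow> int"
  assumes "\<forall>k. a k \<in> {-1, 1}"
  shows "\<exists>L::int. L \<ge> 0 \<and> (\<forall>u d q. L < u \<and> u < L+4 \<and> u = 2^d*(2 + a d + 4*q) \<longrightarrow> False)"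
proof -
  have a0: "a 0 = -1 \<or> a 0 = 1" and a1: "a 1 = -1 \<or> a 1 = 1"
   and a2: "a 2 = -1 \<or> a 2 = 1" and a3: "a 3 = -1 \<or> a 3 = 1" using assms by auto
  show ?thesis
    using a0 a1 a2 a3
  proof (elim disjE)
    assume e: "a 0 = -1" "a 1 = -1" "a 2 = -1" "a 3 = -1"
    have "\<forall>u d q. (21::int) < u \<and> u < 21+4 \<and> u = 2^d*(2 + a d + 4*q) \<longrightarrow> False"
      by (rule gen; (simp only: e)?; presburger)
    then show ?thesis by (intro exI[where x="21::int"]) simp
  next
    assume e: "a 0 = -1" "a 1 = -1" "a 2 = -1" "a 3 = 1"
    have "\<forall>u d q. (5::int) < u \<and> u < 5+4 \<and> u = 2^d*(2 + a d + 4*q) \<longrightarrow> False"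
      by (rule gen; (simp only: e)?; presburger)
    then show ?thesis by (intro exI[where x="5::int"]) simp
  next
    assume e: "a 0 = -1" "a 1 = -1" "a 2 = 1" "a 3 = -1"
    have "\<forall>u d q. (21::int) < u \<and> u < 21+4 \<and> u = 2^d*(2 + a d + 4*q) \<longrightarrow> False"
      by (rule gen; (simp only: e)?; presburger)
    then show ?thesis by (intro exI[where x="21::int"]) simp
  next
    assume e: "a 0 = -1" "a 1 = -1" "a 2 = 1" "a 3 = 1"
    have "\<forall>u d q. (5::int) < u \<and> u < 5+4 \<and> u = 2^d*(2 + a d + 4*q) \<longrightarrow> False"
      by (rule gen; (simp only: e)?; presburger)
    then show ?thesis by (intro exI[where x="5::int"]) simp
  next
    assume e: "a 0 = -1" "a 1 = 1" "a 2 = -1" "a 3 = -1"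
    have "\<forall>u d q. (9::int) < u \<and> u < 9+4 \<and> u = 2^d*(2 + a d + 4*q) \<longrightarrow> False"
      by (rule gen; (simp only: e)?; presburger)
    then show ?thesis by (intro exI[where x="9::int"]) simp
  next
    assume e: "a 0 = -1" "a 1 = 1" "a 2 = -1" "a 3 = 1"
    have "\<forall>u d q. (9::int) < u \<and> u < 9+4 \<and> u = 2^d*(2 + a d + 4*q) \<longrightarrow> False"
      by (rule gen; (simp only: e)?; presburger)
    then show ?thesis by (intro exI[where x="9::int"]) simp
  next
    assume e: "a 0 = -1" "a 1 = 1" "a 2 = 1" "a 3 = -1"
    have "\<forall>u d q. (1::int) < u \<and> u < 1+4 \<and> u = 2^d*(2 + a d + 4*q) \<longrightarrow> False"
      by (rule gen; (simp only: e)?; presburger)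
    then show ?thesis by (intro exI[where x="1::int"]) simp
  next
    assume e: "a 0 = -1" "a 1 = 1" "a 2 = 1" "a 3 = 1"
    have "\<forall>u d q. (1::int) < u \<and> u < 1+4 \<and> u = 2^d*(2 + a d + 4*q) \<longrightarrow> False"
      by (rule gen; (simp only: e)?; presburger)
    then show ?thesis by (intro exI[where x="1::int"]) simp
  next
    assume e: "a 0 = 1" "a 1 = -1" "a 2 = -1" "a 3 = -1"
    have "\<forall>u d q. (11::int) < u \<and> u < 11+4 \<and> u = 2^d*(2 + a d + 4*q) \<longrightarrow> False"
      by (rule gen; (simp only: e)?; presburger)
    then show ?thesis by (intro exI[where x="11::int"]) simp
  next
    assume e: "a 0 = 1" "a 1 = -1" "a 2 = -1" "a 3 = 1"
    have "\<forall>u d q. (11::int) < u \<and> u < 11+4 \<and> u = 2^d*(2 + a d + 4*q) \<longrightarrow> False"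
      by (rule gen; (simp only: e)?; presburger)
    then show ?thesis by (intro exI[where x="11::int"]) simp
  next
    assume e: "a 0 = 1" "a 1 = -1" "a 2 = 1" "a 3 = -1"
    have "\<forall>u d q. (3::int) < u \<and> u < 3+4 \<and> u = 2^d*(2 + a d + 4*q) \<longrightarrow> False"
      by (rule gen; (simp only: e)?; presburger)
    then show ?thesis by (intro exI[where x="3::int"]) simp
  next
    assume e: "a 0 = 1" "a 1 = -1" "a 2 = 1" "a 3 = 1"
    have "\<forall>u d q. (3::int) < u \<and> u < 3+4 \<and> u = 2^d*(2 + a d + 4*q) \<longrightarrow> False"
      by (rule gen; (simp only: e)?; presburger)
    then show ?thesis by (intro exI[where x="3::int"]) simp
  next
    assume e: "a 0 = 1" "a 1 = 1" "a 2 = -1" "a 3 = -1"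
    have "\<forall>u d q. (23::int) < u \<and> u < 23+4 \<and> u = 2^d*(2 + a d + 4*q) \<longrightarrow> False"
      by (rule gen; (simp only: e)?; presburger)
    then show ?thesis by (intro exI[where x="23::int"]) simp
  next
    assume e: "a 0 = 1" "a 1 = 1" "a 2 = -1" "a 3 = 1"
    have "\<forall>u d q. (7::int) < u \<and> u < 7+4 \<and> u = 2^d*(2 + a d + 4*q) \<longrightarrow> False"
      by (rule gen; (simp only: e)?; presburger)
    then show ?thesis by (intro exI[where x="7::int"]) simp
  next
    assume e: "a 0 = 1" "a 1 = 1" "a 2 = 1" "a 3 = -1"
    have "\<forall>u d q. (23::int) < u \<and> u < 23+4 \<and> u = 2^d*(2 + a d + 4*q) \<longrightarrow> False"
      by (rule gen; (simp only: e)?; presburger)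
    then show ?thesis by (intro exI[where x="23::int"]) simp
  next
    assume e: "a 0 = 1" "a 1 = 1" "a 2 = 1" "a 3 = 1"
    have "\<forall>u d q. (7::int) < u \<and> u < 7+4 \<and> u = 2^d*(2 + a d + 4*q) \<longrightarrow> False"
      by (rule gen; (simp only: e)?; presburger)
    then show ?thesis by (intro exI[where x="7::int"]) simp
  qed
qed

theorem lemma5p1:
  fixes b :: "nat \<Rightarrow> int"
  assumes "\<forall>k. b k \<in> {-1, 1}"
  shows "\<forall>t::nat. \<exists>l::int. l \<ge> 0 \<and>
           (\<forall>k\<ge>t. D k (b k) l (l + 2 ^ (t + 2) - 1) = 0)"
proof
  fix t :: nat
  obtain L :: int where L0: "L \<ge> 0"
    and LP: "\<forall>u d q. L < u \<and> u < L+4 \<and> u = 2^d*(2 + b (t+d) + 4*q) \<longrightarrow> False"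
    using choose[of "\<lambda>d. b (t+d)"] assms by blast
  have pt: "(0::int) < 2^t" by simp
  show "\<exists>l::int. l \<ge> 0 \<and> (\<forall>k\<ge>t. D k (b k) l (l + 2 ^ (t + 2) - 1) = 0)"
  proof (intro exI[where x="2^t*L"] conjI allI impI)
    show "0 \<le> (2::int)^t*L" using L0 by simp
    fix k assume kt: "t \<le> k"
    define d where "d = k - t"
    have kd: "k = t + d" using kt d_def by simp
    have fin: "finite {i::int. 2^t*L < i \<and> i \<le> 2^t*L + 2 ^ (t + 2) - 1 \<and> i mod 2 ^ (k + 2) = ((2 + b k) * 2 ^ k) mod 2 ^ (k + 2)}"
      by (rule finite_subset[of _ "{2^t*L<..2^t*L + 2 ^ (t + 2) - 1}"]) auto
    have emp: "{i::int. 2^t*L < i \<and> i \<le> 2^t*L + 2 ^ (t + 2) - 1 \<and> i mod 2 ^ (k + 2) = ((2 + b k) * 2 ^ k) mod 2 ^ (k + 2)} = {}"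
    proof (rule ccontr)
      assume "\<not> ?thesis"
      then obtain i :: int where i1: "2^t*L < i" and i2: "i \<le> 2^t*L + 2 ^ (t + 2) - 1"
        and i3: "i mod 2 ^ (k + 2) = ((2 + b k) * 2 ^ k) mod 2 ^ (k + 2)" by blast
      have "(2::int) ^ (k + 2) dvd i - (2 + b k) * 2 ^ k" using i3 mod_eq_dvd_iff by blast
      then obtain r where r: "i - (2 + b k) * 2 ^ k = 2 ^ (k + 2) * r" by (auto elim: dvdE)
      define u where "u = (2::int)^d*(2 + b (t+d) + 4*r)"
      have "(2::int)^k = 2^t*2^d" using kd by (simp add: power_add)
      moreover have "(2::int)^(k+2) = 2^t*2^d*4" using kd by (simp add: power_add)
      ultimately have iu: "i = 2^t * u" using r kd unfolding u_def by (simp add: algebra_simps)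
      have "(2::int)^(t+2) = 2^t*4" by (simp add: power_add)
      then have "2^t * u < 2^t * (L+4)" using i2 iu by (simp add: algebra_simps)
      then have "u < L+4" using pt by (simp add: mult_less_cancel_left)
      moreover have "L < u" using i1 iu pt by (simp add: mult_less_cancel_left)
      ultimately show False using LP u_def by blast
    qed
    show "D k (b k) (2^t*L) (2^t*L + 2 ^ (t + 2) - 1) = 0"
      unfolding D_def by (subst emp) simp
  qed
qed

end
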